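(* Let $\mathcal{W}_a$ be a finite set of assignment vectors in $\{0,1\}^n$, each with exactly $n_t$ ones (and $n_c=n-n_t\ge 1$ zeros, $n_t\ge 1$), and let $W^{\mathrm{obs}}\in\mathcal{W}_a$ be the observed assignment with observed outcomes $Y_i$ (so $Y_i=Y_i(1)$ if $W^{\mathrm{obs}}_i=1$ and $Y_i=Y_i(0)$ if $W^{\mathrm{obs}}_i=0$). For $\theta\in\mathbb{R}$ define the imputed outcomes under $H_0^\theta: Y_i(1)-Y_i(0)=\theta$ for all $i$ by $\widetilde Y_i(1)=Y_i,\ \widetilde Y_i(0)=Y_i-\theta$ if $W^{\mathrm{obs}}_i=1$ and $\widetilde Y_i(0)=Y_i,\ \widetilde Y_i(1)=Y_i+\theta$ if $W^{\mathrm{obs}}_i=0$, and for $w\in\mathcal{W}_a$ let $\widehat\tau(\mathbf{Y}^{\mathrm{imp}}_\theta,w)=n_t^{-1}\sum_{i:w_i=1}\widetilde Y_i(1)-n_c^{-1}\sum_{i:w_i=0}\widetilde Y_i(0)$. Let $p(\theta)=|\mathcal{W}_a|^{-1}\sum_{w\in\mathcal{W}_a}I\{\widehat\tau(\mathbf{Y}^{\mathrm{imp}}_\theta,w)\ge \widehat\tau(\mathbf{Y}^{\mathrm{imp}}_\theta,W^{\mathrm{obs}})\}$ and $\theta_l=\sup\{\theta:p(\theta)\le\alpha\}$ for a fixed $\alpha\in(0,1)$ (with $\sup\emptyset=-\infty$). Then: (a) for every $W^b\in\mathcal{W}_a$ with $W^b\ne W^{\mathrm{obs}}$, the equation $\widehat\tau(\mathbf{Y}^{\mathrm{imp}}_\theta,W^b)=\widehat\tau(\mathbf{Y}^{\mathrm{imp}}_\theta,W^{\mathrm{obs}})$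 in $\theta$ has the unique solution $$\theta_b=\frac{\sum_{i:W^{\mathrm{obs}}_i=1,W^b_i=0}Y_i(1)-\sum_{i:W^{\mathrm{obs}}_i=0,W^b_i=1}Y_i(0)}{\sum_{i=1}^n I\{W^{\mathrm{obs}}_i=1,W^b_i=0\}};$$ (b) setting $\theta_b=-\infty$ for $W^b=W^{\mathrm{obs}}$ and letting $\theta_{(1)}\le\cdots\le\theta_{(|\mathcal{W}_a|)}$ be the increasingly ordered values of $\theta_b$ over $W^b\in\mathcal{W}_a$, we have $\theta_l=\theta_{(\lfloor\alpha|\mathcal{W}_a|\rfloor+1)}$.
   Context: Potential outcomes framework: units $i=1,\dots,n$ have fixed potential outcomes $Y_i(1),Y_i(0)$; an assignment $W\in\{0,1\}^n$ has $W_i=1$ for treatment. $I\{\cdot\}$ denotes the indicator function and $\lfloor\cdot\rfloor$ the floor function. *)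

theory Defs
  imports Complex_Main "HOL-Library.Multiset" "HOL-Library.Extended_Real"
begin

(* Units are 0..<n. An assignment vector is a predicate w :: nat => bool
   (w i = True means W_i = 1), required to be False outside {0..<n}. *)

definition imp1 :: "(nat \<Rightarrow> bool) \<Rightarrow> (nat \<Rightarrow> real) \<Rightarrow> real \<Rightarrow> nat \<Rightarrow> real" where
  "imp1 Wobs Y \<theta> i = (if Wobs i then Y i else Y i + \<theta>)"

definition imp0 :: "(nat \<Rightarrow> bool) \<Rightarrow> (nat \<Rightarrow> real) \<Rightarrow> real \<Rightarrow> nat \<Rightarrow> real" where
  "imp0 Wobs Y \<theta> i = (if Wobs i then Y i - \<theta> else Y i)"

definition tau_hat :: "nat \<Rightarrow> nat \<Rightarrow> (nat \<Rightarrow> bool) \<Rightarrow> (nat \<Rightarrow> real) \<Rightarrow> real \<Rightarrow> (nat \<Rightarrow> bool) \<Rightarrow> real" where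
  "tau_hat n nt Wobs Y \<theta> w =
     (\<Sum>i\<in>{i. i < n \<and> w i}. imp1 Wobs Y \<theta> i) / real nt
   - (\<Sum>i\<in>{i. i < n \<and> \<not> w i}. imp0 Wobs Y \<theta> i) / real (n - nt)"

definition pval :: "nat \<Rightarrow> nat \<Rightarrow> (nat \<Rightarrow> bool) set \<Rightarrow> (nat \<Rightarrow> bool) \<Rightarrow> (nat \<Rightarrow> real) \<Rightarrow> real \<Rightarrow> real" where
  "pval n nt Wa Wobs Y \<theta> =
     real (card {w \<in> Wa. tau_hat n nt Wobs Y \<theta> w \<ge> tau_hat n nt Wobs Y \<theta> Wobs}) / real (card Wa)"

(* sup over the extended reals, so that Sup {} = -\<infinity> *)
definition theta_l :: "nat \<Rightarrow> nat \<Rightarrow> (nat \<Rightarrow> bool) set \<Rightarrow> (nat \<Rightarrow> bool) \<Rightarrow> (nat \<Rightarrow> real) \<Rightarrow> real \<Rightarrow> ereal" where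
  "theta_l n nt Wa Wobs Y \<alpha> = Sup (ereal ` {\<theta>. pval n nt Wa Wobs Y \<theta> \<le> \<alpha>})"

definition theta_b :: "nat \<Rightarrow> (nat \<Rightarrow> bool) \<Rightarrow> (nat \<Rightarrow> real) \<Rightarrow> (nat \<Rightarrow> real) \<Rightarrow> (nat \<Rightarrow> bool) \<Rightarrow> real" where
  "theta_b n Wobs Y1 Y0 Wb =
     ((\<Sum>i\<in>{i. i < n \<and> Wobs i \<and> \<not> Wb i}. Y1 i) - (\<Sum>i\<in>{i. i < n \<and> \<not> Wobs i \<and> Wb i}. Y0 i))
     / real (card {i. i < n \<and> Wobs i \<and> \<not> Wb i})"

definition theta_b_ext :: "nat \<Rightarrow> (nat \<Rightarrow> bool) \<Rightarrow> (nat \<Rightarrow> real) \<Rightarrow> (nat \<Rightarrow> real) \<Rightarrow> (nat \<Rightarrow> bool) \<Rightarrow> ereal" where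
  "theta_b_ext n Wobs Y1 Y0 Wb = (if Wb = Wobs then -\<infinity> else ereal (theta_b n Wobs Y1 Y0 Wb))"

definition order_stat :: "'a::linorder multiset \<Rightarrow> nat \<Rightarrow> 'a" where
  "order_stat M k = sorted_list_of_multiset M ! (k - 1)"

end

theory Submission
  imports Defs
begin

lemma key:
  fixes n nt :: nat and w Wobs :: "nat \<Rightarrow> bool" and Y1 Y0 Y :: "nat \<Rightarrow> real"
  assumes nt_pos: "1 \<le> nt" and nc_pos: "nt < n"
    and sw: "\<forall>i. n \<le> i \<longrightarrow> \<not> w i" and so: "\<forall>i. n \<le> i \<longrightarrow> \<not> Wobs i"
    and cw: "card {i. i < n \<and> w i} = nt" and co: "card {i. i < n \<and> Wobs i} = nt"
    and Yobs: "\<forall>i<n. Y i = (if Wobs i then Y1 i else Y0 i)"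
    and ne: "w \<noteq> Wobs"
  shows "real (card {i. i < n \<and> Wobs i \<and> \<not> w i}) > 0"
    and "tau_hat n nt Wobs Y \<theta> w - tau_hat n nt Wobs Y \<theta> Wobs
         = (1 / real nt + 1 / real (n - nt)) * real (card {i. i < n \<and> Wobs i \<and> \<not> w i})
           * (\<theta> - theta_b n Wobs Y1 Y0 w)"
proof -
  define A where "A = {i. i < n \<and> Wobs i \<and> \<not> w i}"
  define B where "B = {i. i < n \<and> \<not> Wobs i \<and> w i}"
  define C where "C = {i. i < n \<and> Wobs i \<and> w i}"
  define D where "D = {i. i < n \<and> \<not> Wobs i \<and> \<not> w i}"
  have fA: "finite A" and fB: "finite B" and fC: "finite C" and fD: "finite D"
    by (auto simp: A_def B_def C_def D_def)
  have Sw: "{i. i < n \<and> w i} = C \<union> B" and So: "{i. i < n \<and> Wobs i} = C \<union> A"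
    and Nw: "{i. i < n \<and> \<not> w i} = D \<union> A" and No: "{i. i < n \<and> \<not> Wobs i} = D \<union> B"
    by (auto simp: A_def B_def C_def D_def)
  have dCB: "C \<inter> B = {}" and dCA: "C \<inter> A = {}" and dDA: "D \<inter> A = {}" and dDB: "D \<inter> B = {}"
    by (auto simp: A_def B_def C_def D_def)
  have cAB: "card A = card B"
    using cw co card_Un_disjoint[OF fC fB dCB] card_Un_disjoint[OF fC fA dCA] Sw So by simp
  have mpos: "card A > 0"
  proof (rule ccontr)
    assume "\<not> card A > 0"
    hence "A = {}" "B = {}" using fA fB cAB by auto
    hence "\<forall>i. w i = Wobs i" using sw so unfolding A_def B_def by (metis (mono_tags) empty_iff mem_Collect_eq not_le)
    thus False using ne by auto
  qed
  then show "real (card {i. i < n \<and> Wobs i \<and> \<not> w i}) > 0" by (simp add: A_def)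
  have YA: "sum Y A = sum Y1 A" by (rule sum.cong) (auto simp: A_def Yobs)
  have YB: "sum Y B = sum Y0 B" by (rule sum.cong) (auto simp: B_def Yobs)
  have i1C: "sum (imp1 Wobs Y \<theta>) C = sum Y C" by (rule sum.cong) (auto simp: C_def imp1_def)
  have i1B: "sum (imp1 Wobs Y \<theta>) B = sum Y B + real (card B) * \<theta>"
    by (simp add: sum.distrib B_def imp1_def)
  have i1A: "sum (imp1 Wobs Y \<theta>) A = sum Y A" by (rule sum.cong) (auto simp: A_def imp1_def)
  have i0D: "sum (imp0 Wobs Y \<theta>) D = sum Y D" by (rule sum.cong) (auto simp: D_def imp0_def)
  have i0B: "sum (imp0 Wobs Y \<theta>) B = sum Y B" by (rule sum.cong) (auto simp: B_def imp0_def)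
  have i0A: "sum (imp0 Wobs Y \<theta>) A = sum Y A - real (card A) * \<theta>"
    by (simp add: sum_subtractf A_def imp0_def)
  have ow1: "sum (imp1 Wobs Y \<theta>) {i. i < n \<and> w i} = sum Y C + sum Y B + real (card B) * \<theta>"
    unfolding Sw using sum.union_disjoint[OF fC fB dCB, of "imp1 Wobs Y \<theta>"] i1C i1B by simp
  have oo1: "sum (imp1 Wobs Y \<theta>) {i. i < n \<and> Wobs i} = sum Y C + sum Y A"
    unfolding So using sum.union_disjoint[OF fC fA dCA, of "imp1 Wobs Y \<theta>"] i1C i1A by simp
  have ow0: "sum (imp0 Wobs Y \<theta>) {i. i < n \<and> \<not> w i} = sum Y D + sum Y A - real (card A) * \<theta>"
    unfolding Nw using sum.union_disjoint[OF fD fA dDA, of "imp0 Wobs Y \<theta>"] i0D i0A by simp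
  have oo0: "sum (imp0 Wobs Y \<theta>) {i. i < n \<and> \<not> Wobs i} = sum Y D + sum Y B"
    unfolding No using sum.union_disjoint[OF fD fB dDB, of "imp0 Wobs Y \<theta>"] i0D i0B by simp
  have tb: "theta_b n Wobs Y1 Y0 w = (sum Y1 A - sum Y0 B) / real (card A)"
    unfolding theta_b_def A_def B_def by simp
  have ntp: "real nt > 0" and ncp: "real (n - nt) > 0" using nt_pos nc_pos by auto
  have mp: "real (card A) > 0" using mpos by simp
  define nc where "nc = real (n - nt)"
  have ncp': "nc > 0" using ncp by (simp add: nc_def)
  show "tau_hat n nt Wobs Y \<theta> w - tau_hat n nt Wobs Y \<theta> Wobs
         = (1 / real nt + 1 / real (n - nt)) * real (card {i. i < n \<and> Wobs i \<and> \<not> w i})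
           * (\<theta> - theta_b n Wobs Y1 Y0 w)"
    unfolding tau_hat_def ow1 oo1 ow0 oo0 tb A_def[symmetric] YA YB cAB[symmetric] nc_def[symmetric]
    using ntp ncp' mp by (simp add: field_simps)
qed

lemma sorted_count:
  fixes L :: "'a::linorder list"
  assumes srt: "sorted L" and k: "k < length L"
  shows "length (filter (\<lambda>y. y \<le> x) L) \<le> k \<longleftrightarrow> \<not> L ! k \<le> x"
proof
  assume h: "length (filter (\<lambda>y. y \<le> x) L) \<le> k"
  show "\<not> L ! k \<le> x"
  proof
    assume lk: "L ! k \<le> x"
    have all: "\<forall>y\<in>set (take (Suc k) L). y \<le> x"
    proof
      fix y assume "y \<in> set (take (Suc k) L)"
      then obtain j where j: "j < length (take (Suc k) L)" "y = take (Suc k) L ! j"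
        by (metis in_set_conv_nth)
      hence "y = L ! j" "j \<le> k" by auto
      with srt k have "y \<le> L ! k" by (simp add: sorted_nth_mono)
      with lk show "y \<le> x" by simp
    qed
    hence "filter (\<lambda>y. y \<le> x) (take (Suc k) L) = take (Suc k) L" by simp
    hence "length (filter (\<lambda>y. y \<le> x) (take (Suc k) L)) = Suc k" using k by simp
    moreover have "length (filter (\<lambda>y. y \<le> x) L) \<ge> length (filter (\<lambda>y. y \<le> x) (take (Suc k) L))"
      by (metis append_take_drop_id filter_append length_append le_add1)
    ultimately show False using h by simp
  qed
next
  assume lk: "\<not> L ! k \<le> x"
  have "filter (\<lambda>y. y \<le> x) (drop k L) = []"
  proof (rule filter_False, rule ballI)
    fix y assume "y \<in> set (drop k L)"
    then obtain j where j: "j < length (drop k L)" "y = drop k L ! j"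
      by (metis in_set_conv_nth)
    hence "y = L ! (k + j)" "k + j < length L" using k by auto
    with srt have "L ! k \<le> y" by (simp add: sorted_nth_mono)
    with lk show "\<not> y \<le> x" by auto
  qed
  hence "length (filter (\<lambda>y. y \<le> x) L) = length (filter (\<lambda>y. y \<le> x) (take k L))"
    by (metis append_take_drop_id filter_append append_Nil2)
  also have "\<dots> \<le> length (take k L)" by (rule length_filter_le)
  also have "\<dots> \<le> k" by simp
  finally show "length (filter (\<lambda>y. y \<le> x) L) \<le> k" .
qed

lemma sup_below:
  fixes t :: ereal
  assumes "t \<noteq> \<infinity>"
  shows "Sup (ereal ` {\<theta>. ereal \<theta> < t}) = t"
proof (cases t)
  case (real r)
  have "ereal ` {\<theta>. ereal \<theta> < t} = {-\<infinity><..<ereal r}"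
  proof (rule set_eqI, rule iffI)
    fix x assume "x \<in> {-\<infinity><..<ereal r}"
    then show "x \<in> ereal ` {\<theta>. ereal \<theta> < t}" using real by (cases x) auto
  qed (use real in auto)
  then show ?thesis using real by (simp add: Sup_greaterThanLessThan)
next
  case PInf then show ?thesis using assms by simp
next
  case MInf then show ?thesis by (simp add: bot_ereal_def)
qed

lemma aux0: "(c::real) > 0 \<Longrightarrow> c * (a - b) = 0 \<longleftrightarrow> a = b" by simp

theorem theorem1:
  fixes n nt :: nat and Wa :: "(nat \<Rightarrow> bool) set" and Wobs :: "nat \<Rightarrow> bool"
    and Y1 Y0 Y :: "nat \<Rightarrow> real" and \<alpha> :: real
  assumes fin: "finite Wa"
    and nt_pos: "1 \<le> nt" and nc_pos: "nt < n"
    and supp: "\<forall>w\<in>Wa. \<forall>i. n \<le> i \<longrightarrow> \<not> w i"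
    and ones: "\<forall>w\<in>Wa. card {i. i < n \<and> w i} = nt"
    and obs: "Wobs \<in> Wa"
    and Yobs: "\<forall>i<n. Y i = (if Wobs i then Y1 i else Y0 i)"
    and alpha: "0 < \<alpha>" "\<alpha> < 1"
  shows "(\<forall>Wb\<in>Wa. Wb \<noteq> Wobs \<longrightarrow>
            {\<theta>. tau_hat n nt Wobs Y \<theta> Wb = tau_hat n nt Wobs Y \<theta> Wobs} = {theta_b n Wobs Y1 Y0 Wb})
       \<and> theta_l n nt Wa Wobs Y \<alpha> =
            order_stat (image_mset (theta_b_ext n Wobs Y1 Y0) (mset_set Wa))
                       (nat \<lfloor>\<alpha> * real (card Wa)\<rfloor> + 1)"
proof -
  have K: "tau_hat n nt Wobs Y \<theta> w - tau_hat n nt Wobs Y \<theta> Wobs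
         = (1 / real nt + 1 / real (n - nt)) * real (card {i. i < n \<and> Wobs i \<and> \<not> w i})
           * (\<theta> - theta_b n Wobs Y1 Y0 w)"
    and Kp: "real (card {i. i < n \<and> Wobs i \<and> \<not> w i}) > 0"
    if "w \<in> Wa" "w \<noteq> Wobs" for w \<theta>
    by (rule key[OF nt_pos nc_pos _ _ _ _ Yobs]; use that supp ones obs in auto)+
  have cpos: "(1 / real nt + 1 / real (n - nt)) > 0" using nt_pos nc_pos by (simp add: add_pos_pos)
  have ge: "tau_hat n nt Wobs Y \<theta> w \<ge> tau_hat n nt Wobs Y \<theta> Wobs \<longleftrightarrow> \<theta> \<ge> theta_b n Wobs Y1 Y0 w"
    if "w \<in> Wa" "w \<noteq> Wobs" for w \<theta>
  proof -
    have "tau_hat n nt Wobs Y \<theta> w \<ge> tau_hat n nt Wobs Y \<theta> Wobs \<longleftrightarrow>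
          tau_hat n nt Wobs Y \<theta> w - tau_hat n nt Wobs Y \<theta> Wobs \<ge> 0" by simp
    also have "\<dots> \<longleftrightarrow> \<theta> - theta_b n Wobs Y1 Y0 w \<ge> 0"
      unfolding K[OF that] using mult_pos_pos[OF cpos Kp[OF that]] by (simp add: zero_le_mult_iff)
    finally show ?thesis by simp
  qed
  have partA: "\<forall>Wb\<in>Wa. Wb \<noteq> Wobs \<longrightarrow>
            {\<theta>. tau_hat n nt Wobs Y \<theta> Wb = tau_hat n nt Wobs Y \<theta> Wobs} = {theta_b n Wobs Y1 Y0 Wb}"
  proof (intro ballI impI set_eqI)
    fix Wb \<theta> assume h: "Wb \<in> Wa" "Wb \<noteq> Wobs"
    have "tau_hat n nt Wobs Y \<theta> Wb = tau_hat n nt Wobs Y \<theta> Wobs \<longleftrightarrow>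
          tau_hat n nt Wobs Y \<theta> Wb - tau_hat n nt Wobs Y \<theta> Wobs = 0" by simp
    also have "\<dots> \<longleftrightarrow> \<theta> = theta_b n Wobs Y1 Y0 Wb"
      unfolding K[OF h] by (rule aux0[OF mult_pos_pos[OF cpos Kp[OF h]]])
    finally show "\<theta> \<in> {\<theta>. tau_hat n nt Wobs Y \<theta> Wb = tau_hat n nt Wobs Y \<theta> Wobs} \<longleftrightarrow>
        \<theta> \<in> {theta_b n Wobs Y1 Y0 Wb}" by simp
  qed
  define f where "f = theta_b_ext n Wobs Y1 Y0"
  define M where "M = image_mset f (mset_set Wa)"
  define L where "L = sorted_list_of_multiset M"
  define N where "N = card Wa"
  define k0 where "k0 = nat \<lfloor>\<alpha> * real N\<rfloor>"
  have Npos: "N > 0" using fin obs N_def card_gt_0_iff by blast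
  have lenL: "length L = N"
    unfolding L_def M_def N_def
    by (metis mset_sorted_list_of_multiset size_mset size_image_mset size_mset_set)
  have srt: "sorted L" unfolding L_def by simp
  have k0N: "k0 < N"
  proof -
    have "\<alpha> * real N < real N" using alpha Npos by simp
    hence "\<lfloor>\<alpha> * real N\<rfloor> < int N" by (simp add: floor_less_iff)
    thus ?thesis unfolding k0_def using Npos by linarith
  qed
  have os: "order_stat M (k0 + 1) = L ! k0" unfolding order_stat_def L_def by simp
  have notinf: "L ! k0 \<noteq> \<infinity>"
  proof -
    have "L ! k0 \<in> set L" using k0N lenL by simp
    hence "L ! k0 \<in># M" unfolding L_def by simp
    then obtain w where "L ! k0 = f w" unfolding M_def by auto
    thus ?thesis unfolding f_def theta_b_ext_def by simp
  qed
  have cnt: "card {w \<in> Wa. tau_hat n nt Wobs Y \<theta> w \<ge> tau_hat n nt Wobs Y \<theta> Wobs}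
           = length (filter (\<lambda>y. y \<le> ereal \<theta>) L)" for \<theta>
  proof -
    have "{w \<in> Wa. tau_hat n nt Wobs Y \<theta> w \<ge> tau_hat n nt Wobs Y \<theta> Wobs} = {w \<in> Wa. f w \<le> ereal \<theta>}"
      using ge unfolding f_def theta_b_ext_def by auto
    also have "card \<dots> = size (filter_mset (\<lambda>y. y \<le> ereal \<theta>) M)"
      unfolding M_def filter_mset_image_mset using fin by simp
    also have "\<dots> = length (filter (\<lambda>y. y \<le> ereal \<theta>) L)"
      unfolding L_def by (metis mset_filter mset_sorted_list_of_multiset size_mset)
    finally show ?thesis .
  qed
  have pv: "pval n nt Wa Wobs Y \<theta> \<le> \<alpha> \<longleftrightarrow> ereal \<theta> < L ! k0" for \<theta>
  proof -
    define c where "c = length (filter (\<lambda>y. y \<le> ereal \<theta>) L)"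
    have "pval n nt Wa Wobs Y \<theta> \<le> \<alpha> \<longleftrightarrow> real c / real N \<le> \<alpha>"
      unfolding pval_def cnt c_def N_def by simp
    also have "\<dots> \<longleftrightarrow> real c \<le> \<alpha> * real N" using Npos by (simp add: divide_le_eq)
    also have "\<dots> \<longleftrightarrow> int c \<le> \<lfloor>\<alpha> * real N\<rfloor>" by (simp add: le_floor_iff)
    also have "\<dots> \<longleftrightarrow> c \<le> k0" unfolding k0_def using alpha by (simp add: le_nat_iff)
    also have "\<dots> \<longleftrightarrow> \<not> L ! k0 \<le> ereal \<theta>" unfolding c_def
      using sorted_count[OF srt] k0N lenL by simp
    finally show ?thesis by auto
  qed
  have "theta_l n nt Wa Wobs Y \<alpha> = Sup (ereal ` {\<theta>. ereal \<theta> < L ! k0})"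
    unfolding theta_l_def using pv by simp
  also have "\<dots> = L ! k0" by (rule sup_below[OF notinf])
  finally show ?thesis using partA os unfolding M_def f_def k0_def N_def by simp
qed

end
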